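(* Let $f:[0,1]\to(0,1)$ be a $C^3$ function whose fixed points are isolated, and assume $1/2$ is a stable fixed point of $f$ with $f'(1/2)=0$. Let $(\alpha_n,l_n)_{n\ge0}$ be an urn process associated to $f$. If $f''(1/2)>0$ (respectively $f''(1/2)<0$), then almost surely on the event $\{\alpha_n\to 1/2\}$ one has $\delta_n\to+\infty$ (respectively $\delta_n\to-\infty$).
   Context: A fixed point $p$ of $f$ is stable if $f'(p)\le1$. Urn process associated to $f$: a Markov chain $((\alpha_n,l_n),n\ge 0)$ on $[0,1]\times(0,+\infty)$ with $l_{n+1}=l_n+1$, and $\alpha_{n+1}=(l_n\alpha_n+1)/(l_n+1)$ with probability $f(\alpha_n)$, $\alpha_{n+1}=l_n\alpha_n/(l_n+1)$ with probability $1-f(\alpha_n)$. $\delta_n:=\sum_{k=0}^n(2f(\alpha_k)-1)$. *)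

theory Defs
  imports "HOL-Probability.Probability"
begin

definition urn_up :: "real \<Rightarrow> real \<Rightarrow> real" where
  "urn_up l a = (l * a + 1) / (l + 1)"

definition urn_down :: "real \<Rightarrow> real \<Rightarrow> real" where
  "urn_down l a = (l * a) / (l + 1)"

definition urn_process ::
  "'w measure \<Rightarrow> (nat \<Rightarrow> 'w measure) \<Rightarrow> (real \<Rightarrow> real) \<Rightarrow>
   (nat \<Rightarrow> 'w \<Rightarrow> real) \<Rightarrow> (nat \<Rightarrow> 'w \<Rightarrow> real) \<Rightarrow> bool" where
  "urn_process M F f alpha l \<longleftrightarrow>
     prob_space M \<and>
     (\<forall>n. sigma_finite_subalgebra M (F n)) \<and>
     (\<forall>n. sets (F n) \<subseteq> sets (F (Suc n))) \<and>
     (\<forall>n. alpha n \<in> borel_measurable (F n)) \<and>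
     (\<forall>n. l n \<in> borel_measurable (F n)) \<and>
     (\<forall>x\<in>space M. alpha 0 x \<in> {0..1} \<and> l 0 x > 0) \<and>
     (\<forall>n. \<forall>x\<in>space M. l (Suc n) x = l n x + 1) \<and>
     (\<forall>n. \<forall>x\<in>space M. alpha (Suc n) x = urn_up (l n x) (alpha n x)
                       \<or> alpha (Suc n) x = urn_down (l n x) (alpha n x)) \<and>
     (\<forall>n. AE x in M.
        real_cond_exp M (F n)
          (indicator {w \<in> space M. alpha (Suc n) w = urn_up (l n w) (alpha n w)}) x
        = f (alpha n x))"

definition urn_delta :: "(real \<Rightarrow> real) \<Rightarrow> (nat \<Rightarrow> 'w \<Rightarrow> real) \<Rightarrow> nat \<Rightarrow> 'w \<Rightarrow> real" where
  "urn_delta f alpha n w = (\<Sum>k\<le>n. 2 * f (alpha k w) - 1)"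

end

theory Submission
  imports Defs "HOL-Analysis.Harmonic_Numbers"
begin


lemma taylor_local:
  fixes f f1 f2 f3 :: "real \<Rightarrow> real"
  assumes d1: "\<forall>x\<in>{0..1}. (f has_real_derivative f1 x) (at x within {0..1})"
    and d2: "\<forall>x\<in>{0..1}. (f1 has_real_derivative f2 x) (at x within {0..1})"
    and d3: "\<forall>x\<in>{0..1}. (f2 has_real_derivative f3 x) (at x within {0..1})"
    and fh: "f (1/2) = 1/2" and f1h: "f1 (1/2) = 0" and e: "e > 0"
  shows "\<exists>\<eta>>0. \<eta> \<le> 1/4 \<and> (\<forall>a. \<bar>a - 1/2\<bar> < \<eta> \<longrightarrow>
            \<bar>f a - 1/2 - f2 (1/2) / 2 * (a - 1/2)^2\<bar> \<le> e / 2 * (a - 1/2)^2)"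
proof -
  have at: "\<And>x. x \<in> {0<..<1} \<Longrightarrow> at x within {0..1} = at (x::real)"
    by (rule at_within_interior) simp
  have D1: "DERIV f x :> f1 x" if x: "x \<in> {0<..<1}" for x
  proof -
    have "x \<in> {0..1}" using x by auto
    with d1 have "(f has_real_derivative f1 x) (at x within {0..1})" by blast
    then show ?thesis using at[OF x] by simp
  qed
  have D2: "DERIV f1 x :> f2 x" if x: "x \<in> {0<..<1}" for x
  proof -
    have "x \<in> {0..1}" using x by auto
    with d2 have "(f1 has_real_derivative f2 x) (at x within {0..1})" by blast
    then show ?thesis using at[OF x] by simp
  qed
  have D3: "DERIV f2 x :> f3 x" if x: "x \<in> {0<..<1}" for x
  proof -
    have "x \<in> {0..1}" using x by auto
    with d3 have "(f2 has_real_derivative f3 x) (at x within {0..1})" by blast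
    then show ?thesis using at[OF x] by simp
  qed
  have "isCont f2 (1/2)" using D3[of "1/2"] DERIV_isCont by auto
  then have "f2 \<midarrow>(1/2)\<rightarrow> f2 (1/2)" by (simp add: isCont_def)
  from LIM_D[OF this e] obtain s where s: "s > 0"
    and hs: "\<And>y. y \<noteq> 1/2 \<and> norm (y - 1/2) < s \<Longrightarrow> norm (f2 y - f2 (1/2)) < e" by blast
  define \<eta> where "\<eta> = min s (1/4::real)"
  have "\<eta> > 0" "\<eta> \<le> 1/4" using s by (auto simp: \<eta>_def)
  moreover have "\<bar>f a - 1/2 - f2 (1/2) / 2 * (a - 1/2)^2\<bar> \<le> e / 2 * (a - 1/2)^2"
    if a: "\<bar>a - 1/2\<bar> < \<eta>" for a
  proof (cases "a = 1/2")
    case True show ?thesis unfolding True using fh by simp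
  next
    case False
    define diff where "diff = (\<lambda>m::nat. if m = 0 then f else if m = 1 then f1 else f2)"
    have taylorD: "\<forall>m t. m < 2 \<and> 1/2 - \<eta> \<le> t \<and> t \<le> 1/2 + \<eta> \<longrightarrow> DERIV (diff m) t :> diff (Suc m) t"
    proof (intro allI impI)
      fix m t assume h: "m < (2::nat) \<and> 1/2 - \<eta> \<le> t \<and> t \<le> 1/2 + \<eta>"
      then have "t \<in> {0<..<1}" using \<open>\<eta> \<le> 1/4\<close> by auto
      then show "DERIV (diff m) t :> diff (Suc m) t"
        using h D1 D2 by (cases m) (auto simp: diff_def)
    qed
    have int: "1/2 - \<eta> \<le> (1/2::real)" "1/2 \<le> 1/2 + \<eta>" "1/2 - \<eta> \<le> a" "a \<le> 1/2 + \<eta>" "a \<noteq> 1/2"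
      using a False \<open>\<eta> > 0\<close> by (auto simp: abs_less_iff)
    have "diff 0 = f" by (simp add: diff_def)
    from Taylor[of 2 diff f, OF _ this taylorD int]
    obtain t where t: "(if a < 1/2 then a < t \<and> t < 1/2 else 1/2 < t \<and> t < a)"
      and eq: "f a = (\<Sum>m<2. (diff m (1/2) / fact m) * (a - 1/2)^m) + (diff 2 t / fact 2) * (a - 1/2)^2"
      by auto
    have eq2: "f a = 1/2 + f2 t / 2 * (a - 1/2)^2"
      using eq fh f1h by (simp add: diff_def numeral_2_eq_2)
    have "\<bar>t - 1/2\<bar> < s" "t \<noteq> 1/2" using t a by (auto simp: \<eta>_def split: if_splits)
    then have "\<bar>f2 t - f2 (1/2)\<bar> < e" using hs by auto
    then have "\<bar>(f2 t - f2 (1/2)) / 2 * (a - 1/2)^2\<bar> \<le> e / 2 * (a - 1/2)^2"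
      by (simp add: abs_mult mult_right_mono)
    moreover have "f a - 1/2 - f2 (1/2) / 2 * (a - 1/2)^2 = (f2 t - f2 (1/2)) / 2 * (a - 1/2)^2"
      using eq2 by (simp add: field_simps)
    ultimately show ?thesis by (simp only:)
  qed
  ultimately show ?thesis by blast
qed



lemma sum_at_top:
  fixes a x :: "nat \<Rightarrow> real" and c :: real
  assumes c: "c > 0" and ev: "eventually (\<lambda>k. a k \<ge> c * (x k)^2) sequentially"
    and unb: "\<forall>K::nat. \<exists>n. (\<Sum>j\<le>n. (x j)^2) > real K"
  shows "filterlim (\<lambda>n. \<Sum>k\<le>n. a k) at_top sequentially"
proof -
  obtain N where N: "\<And>k. k \<ge> N \<Longrightarrow> a k \<ge> c * (x k)^2" using ev by (auto simp: eventually_sequentially)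
  define A0 where "A0 = (\<Sum>k<N. a k)"
  define Q0 where "Q0 = (\<Sum>k<N. (x k)^2)"
  have low: "(\<Sum>k\<le>n. a k) \<ge> A0 + c * ((\<Sum>k\<le>n. (x k)^2) - Q0)" if n: "n \<ge> N" for n
  proof -
    have s1: "(\<Sum>k\<le>n. a k) = A0 + (\<Sum>k\<in>{N..<Suc n}. a k)"
      unfolding A0_def using n
      by (simp add: lessThan_Suc_atMost[symmetric] lessThan_atLeast0 sum.atLeastLessThan_concat)
    have s2: "(\<Sum>k\<le>n. (x k)^2) = Q0 + (\<Sum>k\<in>{N..<Suc n}. (x k)^2)"
      unfolding Q0_def using n
      by (simp add: lessThan_Suc_atMost[symmetric] lessThan_atLeast0 sum.atLeastLessThan_concat)
    have "(\<Sum>k\<in>{N..<Suc n}. a k) \<ge> (\<Sum>k\<in>{N..<Suc n}. c * (x k)^2)"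
      by (rule sum_mono) (use N in auto)
    moreover have "(\<Sum>k\<in>{N..<Suc n}. c * (x k)^2) = c * (\<Sum>k\<in>{N..<Suc n}. (x k)^2)"
      by (rule sum_distrib_left[symmetric])
    ultimately show ?thesis unfolding s1 s2 by (simp del: sum.atLeastLessThan_Suc)
  qed
  show ?thesis
    unfolding filterlim_at_top
  proof
    fix Z :: real
    obtain K :: nat where K: "(Z - A0) / c + Q0 \<le> real K" using real_arch_simple by blast
    obtain n1 where n1: "(\<Sum>j\<le>n1. (x j)^2) > real K" using unb by blast
    have "Z \<le> (\<Sum>k\<le>n. a k)" if n: "n \<ge> max N n1" for n
    proof -
      have "(\<Sum>j\<le>n1. (x j)^2) \<le> (\<Sum>j\<le>n. (x j)^2)" by (rule sum_mono2) (use n in auto)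
      with n1 K have "(\<Sum>j\<le>n. (x j)^2) - Q0 \<ge> (Z - A0) / c" by linarith
      then have "c * ((\<Sum>j\<le>n. (x j)^2) - Q0) \<ge> c * ((Z - A0) / c)" using c by (intro mult_left_mono) auto
      then have "c * ((\<Sum>j\<le>n. (x j)^2) - Q0) \<ge> Z - A0" using c by simp
      with low[of n] n show ?thesis by simp
    qed
    then show "eventually (\<lambda>n. Z \<le> (\<Sum>k\<le>n. a k)) sequentially"
      unfolding eventually_sequentially by blast
  qed
qed




lemma harm_shift_at_top:
  assumes a: "(a::real) > 0"
  shows "filterlim (\<lambda>T. \<Sum>n<T. 1 / (a + real n)) at_top sequentially"
proof -
  define A where "A = max a 1"
  have A: "A \<ge> a" "A \<ge> 1" "A > 0" by (auto simp: A_def)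
  have "filterlim (\<lambda>T. (1/A) * harm T) at_top sequentially"
    by (rule filterlim_tendsto_pos_mult_at_top[OF tendsto_const _ harm_at_top]) (use A in simp)
  moreover have "(1/A) * harm T \<le> (\<Sum>n<T. 1 / (a + real n))" for T
  proof -
    have "(1/A) * harm T = (\<Sum>n<T. 1 / (A * (real n + 1)))"
      by (simp add: harm_altdef sum_distrib_left field_simps)
    also have "\<dots> \<le> (\<Sum>n<T. 1 / (a + real n))"
    proof (rule sum_mono)
      fix n assume "n \<in> {..<T}"
      have "a + real n \<le> A * (real n + 1)"
        using A mult_left_mono[of 1 A "real n"] by (simp add: algebra_simps)
      then show "1 / (A * (real n + 1)) \<le> 1 / (a + real n)"
        using a by (intro divide_left_mono) (auto intro: mult_pos_pos)
    qed
    finally show ?thesis .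
  qed
  ultimately show ?thesis
    using filterlim_at_top_mono always_eventually by (metis (mono_tags, lifting))
qed

lemma contra_lemma:
  fixes p cz K C Lp :: real and h :: "nat \<Rightarrow> real"
  assumes Lp: "Lp > 0" and cz: "cz > 0" and p: "p \<ge> 0"
    and h: "filterlim h at_top sequentially"
    and ineq: "\<And>T. p * ((\<Sum>n<T. (h n - C) / (Lp + real n)) - K) \<le> cz * (\<Sum>n<T. 1 / (Lp + real n))"
  shows "p = 0"
proof (rule ccontr)
  assume "p \<noteq> 0"
  with p have pp: "p > 0" by simp
  define J where "J T = (\<Sum>n<T. 1 / (Lp + real n))" for T
  define R where "R T = (\<Sum>n<T. (h n - C) / (Lp + real n))" for T
  from h have "eventually (\<lambda>n. h n \<ge> C + 2 * cz / p) sequentially"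
    by (simp add: filterlim_at_top)
  then obtain n0 where n0: "\<And>n. n \<ge> n0 \<Longrightarrow> h n \<ge> C + 2 * cz / p"
    by (auto simp: eventually_sequentially)
  have J_at_top: "filterlim J at_top sequentially" unfolding J_def by (rule harm_shift_at_top[OF Lp])
  have key: "R T \<ge> R n0 + (2 * cz / p) * (J T - J n0)" if T: "T \<ge> n0" for T
  proof -
    have "R T = R n0 + (\<Sum>n\<in>{n0..<T}. (h n - C) / (Lp + real n))"
      unfolding R_def using T
      by (simp add: lessThan_atLeast0 sum.atLeastLessThan_concat)
    moreover have "J T = J n0 + (\<Sum>n\<in>{n0..<T}. 1 / (Lp + real n))"
      unfolding J_def using T
      by (simp add: lessThan_atLeast0 sum.atLeastLessThan_concat)
    moreover have "(\<Sum>n\<in>{n0..<T}. (h n - C) / (Lp + real n)) \<ge> (\<Sum>n\<in>{n0..<T}. (2 * cz / p) * (1 / (Lp + real n)))"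
    proof (rule sum_mono)
      fix n assume "n \<in> {n0..<T}"
      then have "h n \<ge> C + 2 * cz / p" using n0 by auto
      then have "h n - C \<ge> 2 * cz / p" by linarith
      moreover have "Lp + real n > 0" using Lp by simp
      ultimately have "(2 * cz / p) / (Lp + real n) \<le> (h n - C) / (Lp + real n)"
        by (intro divide_right_mono) auto
      then show "(2 * cz / p) * (1 / (Lp + real n)) \<le> (h n - C) / (Lp + real n)"
        by simp
    qed
    ultimately show ?thesis by (simp add: sum_distrib_left algebra_simps)
  qed
  define Z where "Z = (2 * cz * J n0 + p * K - p * R n0) / cz + 1"
  from J_at_top have "eventually (\<lambda>T. J T \<ge> Z) sequentially" by (simp add: filterlim_at_top)
  then obtain T1 where T1: "\<And>T. T \<ge> T1 \<Longrightarrow> J T \<ge> Z" by (auto simp: eventually_sequentially)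
  define T where "T = max T1 n0"
  have JT: "J T \<ge> Z" using T1 by (simp add: T_def)
  have kT: "R T \<ge> R n0 + (2 * cz / p) * (J T - J n0)" using key by (simp add: T_def)
  have "p * (R T - K) \<le> cz * J T" using ineq[of T] by (simp add: R_def J_def)
  moreover have "p * R T \<ge> p * R n0 + 2 * cz * (J T - J n0)"
  proof -
    have e: "p * ((2 * cz / p) * (J T - J n0)) = 2 * cz * (J T - J n0)" using pp by simp
    have "p * (R n0 + (2 * cz / p) * (J T - J n0)) \<le> p * R T"
      using mult_left_mono[OF kT, of p] pp by simp
    then show ?thesis unfolding distrib_left e by simp
  qed
  ultimately have "cz * J T \<le> 2 * cz * J n0 + p * K - p * R n0"
    by (simp add: algebra_simps)
  then have "J T \<le> (2 * cz * J n0 + p * K - p * R n0) / cz"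
    using cz by (simp add: field_simps)
  then show False using JT by (simp add: Z_def)
qed

lemma alg_id:
  fixes lv a xi phi x :: real
  assumes l1: "lv + 1 > 0" and xi: "xi = 0 \<or> xi = 1" and x: "x = a - 1/2"
  shows "(lv + 1) * ((lv * a + xi) / (lv + 1) - 1/2)^2 - lv * (a - 1/2)^2
           - 2 * lv * (a - 1/2) / (lv + 1) * (xi - phi)
         = (2 * lv * x * (phi - 1/2) + 1/4 - lv * x^2) / (lv + 1)"
proof -
  have e1: "(lv * a + xi) / (lv + 1) - 1/2 = (lv * x + (xi - 1/2)) / (lv + 1)"
    using l1 unfolding x by (simp add: field_simps)
  have e2: "(xi - 1/2)^2 = 1/4" using xi by (auto simp: power2_eq_square)
  have "(lv + 1) * ((lv * x + (xi - 1/2)) / (lv + 1))^2 = (lv * x + (xi - 1/2))^2 / (lv + 1)"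
  proof -
    have sq: "\<And>P q::real. q \<noteq> 0 \<Longrightarrow> q * (P/q)^2 = P^2/q" by (simp add: power2_eq_square)
    show ?thesis using sq l1 by simp
  qed
  also have "\<dots> = (lv^2 * x^2 + 2 * lv * x * (xi - 1/2) + 1/4) / (lv + 1)"
    using e2 by (simp add: power2_eq_square algebra_simps)
  finally have e3: "(lv + 1) * ((lv * a + xi) / (lv + 1) - 1/2)^2 = (lv^2 * x^2 + 2 * lv * x * (xi - 1/2) + 1/4) / (lv + 1)"
    using e1 by simp
  have e4: "lv * (a - 1/2)^2 = (lv^2 * x^2 + lv * x^2) / (lv + 1)"
    using l1 unfolding x by (simp add: field_simps power2_eq_square)
  have e5: "2 * lv * (a - 1/2) / (lv + 1) * (xi - phi) = (2 * lv * x * (xi - phi)) / (lv + 1)"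
    using x by simp
  show ?thesis unfolding e3 e4 e5
    by (simp add: diff_divide_distrib[symmetric] add_divide_distrib[symmetric] algebra_simps)
qed

lemma alg_step:
  fixes lv a xi phi Bc :: real
  assumes lv: "lv > 0" and xi: "xi \<in> {0,1}" and B: "\<bar>(a - 1/2) * (phi - 1/2)\<bar> \<le> Bc * (a - 1/2)^2"
  shows "(lv + 1) * ((lv * a + xi) / (lv + 1) - 1/2)^2 - lv * (a - 1/2)^2
           - 2 * lv * (a - 1/2) / (lv + 1) * (xi - phi)
         \<ge> 1 / (4 * (lv + 1)) - (2 * Bc + 1) * (a - 1/2)^2"
proof -
  define x where "x = a - 1/2"
  have l1: "lv + 1 > 0" using lv by simp
  have id: "(lv + 1) * ((lv * a + xi) / (lv + 1) - 1/2)^2 - lv * (a - 1/2)^2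
           - 2 * lv * (a - 1/2) / (lv + 1) * (xi - phi)
         = 2 * (lv / (lv + 1)) * (x * (phi - 1/2)) + 1 / (4 * (lv + 1)) - (lv / (lv + 1)) * x^2"
  proof -
    have "xi = 0 \<or> xi = 1" using xi by auto
    from alg_id[OF l1 this x_def, of phi]
    show ?thesis by (simp add: add_divide_distrib diff_divide_distrib)
  qed
  have q0: "lv / (lv + 1) \<ge> 0" "lv / (lv + 1) \<le> 1" using lv by auto
  have "x * (phi - 1/2) \<ge> - (Bc * x^2)" using B unfolding x_def by linarith
  then have t1: "(lv / (lv + 1)) * (x * (phi - 1/2)) \<ge> (lv / (lv + 1)) * (- (Bc * x^2))"
    using q0 by (intro mult_left_mono) auto
  have bx: "Bc * x^2 \<ge> 0" using B abs_ge_zero[of "(a - 1/2) * (phi - 1/2)"] unfolding x_def by linarith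
  have "(lv / (lv + 1)) * (Bc * x^2) \<le> 1 * (Bc * x^2)"
    using q0 bx by (intro mult_right_mono) auto
  then have "(lv / (lv + 1)) * (- (Bc * x^2)) \<ge> 1 * (- (Bc * x^2))" by simp
  with t1 have t1': "(lv / (lv + 1)) * (x * (phi - 1/2)) \<ge> - (Bc * x^2)" by simp
  have t2: "(lv / (lv + 1)) * x^2 \<le> 1 * x^2" using q0 by (intro mult_right_mono) auto
  have e: "(2 * Bc + 1) * x^2 = 2 * (Bc * x^2) + x^2" by (simp add: algebra_simps)
  show ?thesis unfolding id unfolding x_def[symmetric] e using t1' t2 by linarith
qed



lemma urn_up_meas[measurable]:
  assumes [measurable]: "a \<in> borel_measurable N" "b \<in> borel_measurable N"
  shows "(\<lambda>w. urn_up (a w) (b w)) \<in> borel_measurable N"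
  unfolding urn_up_def by measurable

locale urnP =
  fixes M :: "'w measure" and F :: "nat \<Rightarrow> 'w measure" and f :: "real \<Rightarrow> real"
    and alpha l :: "nat \<Rightarrow> 'w \<Rightarrow> real" and Bc :: real
  assumes urn: "urn_process M F f alpha l"
    and frange: "\<forall>x\<in>{0..1}. f x \<in> {0<..<1}"
    and fcont: "continuous_on {0..1} f"
    and Bc: "Bc \<ge> 0" "\<forall>a\<in>{0..1}. \<bar>(a - 1/2) * (f a - 1/2)\<bar> \<le> Bc * (a - 1/2)^2"
begin

lemmas U0 = urn[unfolded urn_process_def]
lemmas U = U0[] U0[] U0[] U0[] U0[] U0[] U0[] U0[] U0[] U0[] U0[] U0[] U0[] U0[] U0[] U0[] U0[] U0[] U0[] U0[] U0[] U0[] U0[] U0[] U0[] U0[] U0[] U0[] U0[] U0[] U0[] U0[] U0[] U0[] U0[] U0[] U0[] U0[] U0[] U0[] U0[] U0[] U0[] U0[] U0[] U0[] U0[] U0[] U0[] U0[] U0[] U0[] U0[]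

lemma ps: "prob_space M" using U(1) by blast
lemma sfs: "sigma_finite_subalgebra M (F n)" using U(2) by blast
lemma subalg: "subalgebra M (F n)" using sfs sigma_finite_subalgebra.subalg by blast
lemma spF: "space (F n) = space M" using subalg by (simp add: subalgebra_def)
lemma mono1: "sets (F n) \<subseteq> sets (F (Suc n))" using U(3) by blast
lemma monoF: "j \<le> n \<Longrightarrow> sets (F j) \<subseteq> sets (F n)"
proof (induction n rule: dec_induct)
  case base then show ?case by simp
next
  case (step n) then show ?case using mono1[of n] by blast
qed
lemma subF: "j \<le> n \<Longrightarrow> subalgebra (F n) (F j)"
  using monoF spF by (simp add: subalgebra_def)
lemma measF: "j \<le> n \<Longrightarrow> g \<in> borel_measurable (F j) \<Longrightarrow> g \<in> borel_measurable (F n)"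
  using subF measurable_from_subalg by blast
lemma measM: "g \<in> borel_measurable (F j) \<Longrightarrow> g \<in> borel_measurable M"
  using subalg measurable_from_subalg by blast

lemma alpha_F: "j \<le> n \<Longrightarrow> alpha j \<in> borel_measurable (F n)"
  using U(4) measF by blast
lemma l_F: "j \<le> n \<Longrightarrow> l j \<in> borel_measurable (F n)"
  using U(5) measF by blast
lemma alpha_M[measurable]: "alpha j \<in> borel_measurable M"
  using alpha_F[of j j] measM by blast
lemma l_M[measurable]: "l j \<in> borel_measurable M"
  using l_F[of j j] measM by blast

lemma l_eq: "w \<in> space M \<Longrightarrow> l n w = l 0 w + real n"
  using U(7) by (induction n) auto
lemma l0pos: "w \<in> space M \<Longrightarrow> l 0 w > 0"
  using U(6) by blast
lemma lpos: "w \<in> space M \<Longrightarrow> l n w > 0"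
  using l_eq l0pos by (metis add_pos_nonneg of_nat_0_le_iff)

definition xi :: "nat \<Rightarrow> 'w \<Rightarrow> real" where
  "xi n = indicator {w \<in> space M. alpha (Suc n) w = urn_up (l n w) (alpha n w)}"

lemma xi01: "xi n w \<in> {0,1}" by (simp add: xi_def indicator_def)

lemma step: "w \<in> space M \<Longrightarrow> alpha (Suc n) w = (l n w * alpha n w + xi n w) / (l n w + 1)"
proof -
  assume w: "w \<in> space M"
  have disj: "alpha (Suc n) w = urn_up (l n w) (alpha n w) \<or> alpha (Suc n) w = urn_down (l n w) (alpha n w)"
    using U(8) w by blast
  show ?thesis
  proof (cases "alpha (Suc n) w = urn_up (l n w) (alpha n w)")
    case True
    then have "xi n w = 1" using w by (simp add: xi_def)
    then show ?thesis using True by (simp add: urn_up_def)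
  next
    case False
    then have "xi n w = 0" using w by (simp add: xi_def)
    moreover have "alpha (Suc n) w = urn_down (l n w) (alpha n w)" using False disj by blast
    ultimately show ?thesis by (simp add: urn_down_def)
  qed
qed

lemma arange: "w \<in> space M \<Longrightarrow> alpha n w \<in> {0..1}"
proof (induction n)
  case 0 then show ?case using U(6) by blast
next
  case (Suc n)
  have lp: "l n w > 0" using lpos Suc by blast
  have xi: "xi n w \<in> {0,1}" by (rule xi01)
  have a: "0 \<le> alpha n w" "alpha n w \<le> 1" using Suc by auto
  have "0 \<le> l n w * alpha n w + xi n w" using lp a xi by auto
  moreover have "l n w * alpha n w \<le> l n w"
    using lp a mult_left_mono[of "alpha n w" 1 "l n w"] by auto
  then have "l n w * alpha n w + xi n w \<le> l n w + 1"
    using xi by auto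
  ultimately show ?case using step[OF Suc.prems] lp by (auto simp: field_simps)
qed

lemma xi_set_F: "j < n \<Longrightarrow> {w \<in> space M. alpha (Suc j) w = urn_up (l j w) (alpha j w)} \<in> sets (F n)"
proof -
  assume j: "j < n"
  have [measurable]: "alpha (Suc j) \<in> borel_measurable (F n)" "alpha j \<in> borel_measurable (F n)"
    "l j \<in> borel_measurable (F n)" using j alpha_F l_F by auto
  have "{w \<in> space M. alpha (Suc j) w = urn_up (l j w) (alpha j w)} =
        {w \<in> space (F n). alpha (Suc j) w = urn_up (l j w) (alpha j w)}" by (simp add: spF)
  also have "\<dots> \<in> sets (F n)" by (rule borel_measurable_eq) (auto intro: urn_up_meas)
  finally show ?thesis .
qed

lemma xi_F: "j < n \<Longrightarrow> xi j \<in> borel_measurable (F n)"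
  unfolding xi_def using xi_set_F by (rule borel_measurable_indicator)

lemma xi_M[measurable]: "xi j \<in> borel_measurable M"
  using xi_F[of j "Suc j"] measM by blast

definition fc :: "real \<Rightarrow> real" where "fc x = f (max 0 (min 1 x))"

lemma fc_meas[measurable]: "fc \<in> borel_measurable borel"
proof -
  have "continuous_on UNIV (\<lambda>x. f (max 0 (min 1 x)))"
    by (rule continuous_on_compose2[OF fcont]) (auto intro!: continuous_intros)
  then have "continuous_on UNIV fc" unfolding fc_def .
  then show ?thesis by (rule borel_measurable_continuous_onI)
qed

lemma f_alpha_F: "j \<le> n \<Longrightarrow> (\<lambda>w. f (alpha j w)) \<in> borel_measurable (F n)"
proof -
  assume j: "j \<le> n"
  have [measurable]: "alpha j \<in> borel_measurable (F n)" using j alpha_F by auto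
  have m: "(\<lambda>w. fc (alpha j w)) \<in> borel_measurable (F n)" by measurable
  have eq: "\<And>w. w \<in> space (F n) \<Longrightarrow> f (alpha j w) = fc (alpha j w)"
    using arange spF by (auto simp: fc_def)
  show ?thesis by (subst measurable_cong[OF eq]) (auto simp: m)
qed

lemma f_alpha_M[measurable]: "(\<lambda>w. f (alpha j w)) \<in> borel_measurable M"
  using f_alpha_F[of j j] measM by blast

lemma frange': "w \<in> space M \<Longrightarrow> f (alpha n w) \<in> {0<..<1}"
  using frange arange by blast


sublocale prob_space M by (rule ps)

lemma bint: "(g :: 'w \<Rightarrow> real) \<in> borel_measurable M \<Longrightarrow> (\<And>w. w \<in> space M \<Longrightarrow> \<bar>g w\<bar> \<le> (C::real)) \<Longrightarrow> integrable M g"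
  by (rule integrable_const_bound[where B=C]) auto

lemma xi_bound: "\<bar>xi n w\<bar> \<le> 1" using xi01[of n w] by auto

lemma E1:
  assumes g: "g \<in> borel_measurable (F n)" and gb: "\<And>w. w \<in> space M \<Longrightarrow> \<bar>g w\<bar> \<le> C"
  shows "(\<integral>w. g w * xi n w \<partial>M) = (\<integral>w. g w * f (alpha n w) \<partial>M)"
proof -
  interpret S: sigma_finite_subalgebra M "F n" by (rule sfs)
  have gM[measurable]: "g \<in> borel_measurable M" using g measM by blast
  have int: "integrable M (\<lambda>w. g w * xi n w)"
  proof (rule bint[where C=C])
    show "(\<lambda>w. g w * xi n w) \<in> borel_measurable M" by measurable
    fix w assume w: "w \<in> space M"
    have "\<bar>g w * xi n w\<bar> \<le> \<bar>g w\<bar> * 1" unfolding abs_mult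
      by (rule mult_left_mono[OF xi_bound]) simp
    then show "\<bar>g w * xi n w\<bar> \<le> C" using gb[OF w] by simp
  qed
  have "(\<integral>w. g w * xi n w \<partial>M) = (\<integral>w. g w * real_cond_exp M (F n) (xi n) w \<partial>M)"
    using S.real_cond_exp_intg(2)[OF int g xi_M] by simp
  also have "\<dots> = (\<integral>w. g w * f (alpha n w) \<partial>M)"
  proof (rule integral_cong_AE)
    show "(\<lambda>w. g w * real_cond_exp M (F n) (xi n) w) \<in> borel_measurable M" by measurable
    show "(\<lambda>w. g w * f (alpha n w)) \<in> borel_measurable M" by measurable
    show "AE w in M. g w * real_cond_exp M (F n) (xi n) w = g w * f (alpha n w)"
      using U(9) unfolding xi_def by (auto elim!: AE_mp)
  qed
  finally show ?thesis .
qed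

definition G :: "real \<Rightarrow> nat \<Rightarrow> 'w \<Rightarrow> real" where
  "G K k w = (if (\<Sum>j\<le>k. (alpha j w - 1/2)^2) \<le> K then 1 else 0)"
definition cc :: "nat \<Rightarrow> 'w \<Rightarrow> real" where
  "cc k w = 2 * l k w * (alpha k w - 1/2) / (l k w + 1)"
definition mm :: "real \<Rightarrow> nat \<Rightarrow> 'w \<Rightarrow> real" where
  "mm K k w = G K k w * cc k w * (xi k w - f (alpha k w))"
definition S :: "real \<Rightarrow> nat \<Rightarrow> 'w \<Rightarrow> real" where
  "S K n w = (\<Sum>k<n. mm K k w)"

lemma G_F: "k \<le> n \<Longrightarrow> G K k \<in> borel_measurable (F n)"
proof -
  assume kn: "k \<le> n"
  have [measurable]: "(\<lambda>w. \<Sum>j\<le>k. (alpha j w - 1/2)^2) \<in> borel_measurable (F n)"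
  proof (rule borel_measurable_sum)
    fix i assume "i \<in> {..k}"
    then have [measurable]: "alpha i \<in> borel_measurable (F n)" using kn alpha_F by auto
    show "(\<lambda>w. (alpha i w - 1/2)^2) \<in> borel_measurable (F n)" by measurable
  qed
  show ?thesis unfolding G_def[abs_def] by measurable
qed

lemma cc_F: "k \<le> n \<Longrightarrow> cc k \<in> borel_measurable (F n)"
proof -
  assume kn: "k \<le> n"
  have [measurable]: "alpha k \<in> borel_measurable (F n)" "l k \<in> borel_measurable (F n)"
    using kn alpha_F l_F by auto
  show ?thesis unfolding cc_def[abs_def] by measurable
qed

lemma mm_F: "k < n \<Longrightarrow> mm K k \<in> borel_measurable (F n)"
proof -
  assume kn: "k < n"
  have [measurable]: "G K k \<in> borel_measurable (F n)" "cc k \<in> borel_measurable (F n)"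
     "xi k \<in> borel_measurable (F n)" "(\<lambda>w. f (alpha k w)) \<in> borel_measurable (F n)"
    using kn G_F cc_F xi_F f_alpha_F by auto
  show ?thesis unfolding mm_def[abs_def] by measurable
qed

lemma S_F: "S K n \<in> borel_measurable (F n)"
proof -
  have "(\<lambda>w. \<Sum>k<n. mm K k w) \<in> borel_measurable (F n)"
    by (rule borel_measurable_sum) (use mm_F in auto)
  then show ?thesis unfolding S_def[abs_def] .
qed

lemma G_M[measurable]: "G K k \<in> borel_measurable M" using G_F[of k k] measM by blast
lemma cc_M[measurable]: "cc k \<in> borel_measurable M" using cc_F[of k k] measM by blast
lemma mm_M[measurable]: "mm K k \<in> borel_measurable M" using mm_F[of k "Suc k"] measM by blast
lemma S_M[measurable]: "S K n \<in> borel_measurable M" using S_F[of K n] measM by blast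

lemma G01: "G K k w \<in> {0,1}" by (simp add: G_def)

lemma cc_bound: assumes w: "w \<in> space M" shows "\<bar>cc k w\<bar> \<le> 1" "cc k w ^ 2 \<le> 4 * (alpha k w - 1/2)^2"
proof -
  have lp: "l k w > 0" using lpos[OF w] .
  have a: "\<bar>alpha k w - 1/2\<bar> \<le> 1/2" proof -
    have "0 \<le> alpha k w" "alpha k w \<le> 1" using arange[OF w, of k] by auto
    then show ?thesis by linarith
  qed
  have "\<bar>cc k w\<bar> = 2 * l k w * \<bar>alpha k w - 1/2\<bar> / (l k w + 1)"
    using lp by (simp add: cc_def abs_mult abs_divide)
  also have "\<dots> \<le> 2 * l k w * (1/2) / (l k w + 1)"
    using lp a by (intro divide_right_mono mult_left_mono) auto
  also have "\<dots> \<le> 1" using lp by simp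
  finally show "\<bar>cc k w\<bar> \<le> 1" .
  have "l k w / (l k w + 1) \<le> 1" using lp by simp
  moreover have "l k w / (l k w + 1) \<ge> 0" using lp by simp
  ultimately have q: "(l k w / (l k w + 1))^2 \<le> 1" by (simp add: power_le_one)
  have "cc k w ^ 2 = 4 * (alpha k w - 1/2)^2 * (l k w / (l k w + 1))^2"
    by (simp add: cc_def power2_eq_square field_simps)
  also have "\<dots> \<le> 4 * (alpha k w - 1/2)^2 * 1"
    by (rule mult_left_mono[OF q]) simp
  finally show "cc k w ^ 2 \<le> 4 * (alpha k w - 1/2)^2" by simp
qed

lemma mm_bound: assumes w: "w \<in> space M"
  shows "\<bar>mm K k w\<bar> \<le> 1" "(mm K k w)^2 \<le> G K k w * cc k w ^ 2"
proof -
  have fr: "f (alpha k w) \<in> {0<..<1}" using frange'[OF w] .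
  have d: "\<bar>xi k w - f (alpha k w)\<bar> \<le> 1" using xi01[of k w] fr by auto
  have g: "\<bar>G K k w\<bar> \<le> 1" using G01[of K k w] by auto
  have "\<bar>mm K k w\<bar> = \<bar>G K k w\<bar> * \<bar>cc k w\<bar> * \<bar>xi k w - f (alpha k w)\<bar>"
    by (simp add: mm_def abs_mult)
  also have "\<dots> \<le> 1 * 1 * 1"
    using g d cc_bound(1)[OF w, of k] by (intro mult_mono) auto
  finally show "\<bar>mm K k w\<bar> \<le> 1" by simp
  have d2: "(xi k w - f (alpha k w))^2 \<le> 1" using d by (simp add: abs_square_le_1)
  have "(mm K k w)^2 = G K k w * cc k w ^ 2 * (xi k w - f (alpha k w))^2"
    using G01[of K k w] by (auto simp: mm_def power_mult_distrib)
  also have "\<dots> \<le> G K k w * cc k w ^ 2 * 1"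
    using G01[of K k w] d2 by (intro mult_left_mono) auto
  finally show "(mm K k w)^2 \<le> G K k w * cc k w ^ 2" by simp
qed

lemma S_bound: "w \<in> space M \<Longrightarrow> \<bar>S K n w\<bar> \<le> real n"
proof -
  assume w: "w \<in> space M"
  have "\<bar>S K n w\<bar> \<le> (\<Sum>k<n. \<bar>mm K k w\<bar>)" unfolding S_def by (rule sum_abs)
  also have "\<dots> \<le> (\<Sum>k<n. 1)" by (rule sum_mono) (rule mm_bound(1)[OF w])
  finally show ?thesis by simp
qed


lemma sumGx: assumes K: "K \<ge> 0"
  shows "(\<Sum>k<n. G K k w * (alpha k w - 1/2)^2) \<le> min K (\<Sum>k<n. (alpha k w - 1/2)^2)"
proof (induction n)
  case 0 then show ?case using K by simp
next
  case (Suc n)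
  show ?case
  proof (cases "(\<Sum>j\<le>n. (alpha j w - 1/2)^2) \<le> K")
    case True
    then have "G K n w = 1" by (simp add: G_def)
    moreover have "(\<Sum>k<n. G K k w * (alpha k w - 1/2)^2) \<le> (\<Sum>k<n. (alpha k w - 1/2)^2)"
      using Suc by simp
    ultimately show ?thesis using True by (simp add: lessThan_Suc_atMost[symmetric])
  next
    case False
    then have "G K n w = 0" by (simp add: G_def)
    then have A: "(\<Sum>k<Suc n. G K k w * (alpha k w - 1/2)^2) = (\<Sum>k<n. G K k w * (alpha k w - 1/2)^2)"
      by simp
    have B: "(\<Sum>k<n. (alpha k w - 1/2)^2) \<le> (\<Sum>k<Suc n. (alpha k w - 1/2)^2)" by simp
    have I1: "(\<Sum>k<n. G K k w * (alpha k w - 1/2)^2) \<le> K"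
      and I2: "(\<Sum>k<n. G K k w * (alpha k w - 1/2)^2) \<le> (\<Sum>k<n. (alpha k w - 1/2)^2)"
      using Suc.IH by simp_all
    show ?thesis unfolding A min.bounded_iff using I1 I2 B by linarith
  qed
qed

lemma sumGcc: assumes K: "K \<ge> 0" and w: "w \<in> space M"
  shows "(\<Sum>k<n. G K k w * cc k w ^ 2) \<le> 4 * K"
proof -
  have "(\<Sum>k<n. G K k w * cc k w ^ 2) \<le> (\<Sum>k<n. 4 * (G K k w * (alpha k w - 1/2)^2))"
  proof (rule sum_mono)
    fix k assume "k \<in> {..<n}"
    have "G K k w * cc k w ^ 2 \<le> G K k w * (4 * (alpha k w - 1/2)^2)"
      using G01[of K k w] cc_bound(2)[OF w, of k] by (intro mult_left_mono) auto
    then show "G K k w * cc k w ^ 2 \<le> 4 * (G K k w * (alpha k w - 1/2)^2)" by simp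
  qed
  also have "\<dots> = 4 * (\<Sum>k<n. G K k w * (alpha k w - 1/2)^2)" by (simp add: sum_distrib_left)
  also have "\<dots> \<le> 4 * K" using sumGx[OF K, where n=n and w=w] by simp
  finally show ?thesis .
qed

lemma S_sq_bound: "w \<in> space M \<Longrightarrow> \<bar>(S K n w)^2\<bar> \<le> real n ^ 2"
proof -
  assume w: "w \<in> space M"
  have "\<bar>S K n w\<bar>^2 \<le> (real n)^2" by (rule power_mono[OF S_bound[OF w]]) simp
  then show ?thesis by simp
qed

lemma ES2: "(\<integral>w. (S K n w)^2 \<partial>M) \<le> (\<integral>w. (\<Sum>k<n. G K k w * cc k w ^ 2) \<partial>M)"
proof (induction n)
  case 0 then show ?case by (simp add: S_def)
next
  case (Suc n)
  define g where "g w = S K n w * G K n w * cc n w" for w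
  have gF: "g \<in> borel_measurable (F n)"
  proof -
    have [measurable]: "S K n \<in> borel_measurable (F n)" "G K n \<in> borel_measurable (F n)" "cc n \<in> borel_measurable (F n)"
      using S_F G_F[of n n] cc_F[of n n] by auto
    show ?thesis unfolding g_def[abs_def] by measurable
  qed
  have gM[measurable]: "g \<in> borel_measurable M" using gF measM by blast
  have gb: "\<bar>g w\<bar> \<le> real n" if w: "w \<in> space M" for w
  proof -
    have "\<bar>g w\<bar> = \<bar>S K n w\<bar> * \<bar>G K n w\<bar> * \<bar>cc n w\<bar>" by (simp add: g_def abs_mult)
    also have "\<dots> \<le> real n * 1 * 1"
      using S_bound[OF w, of K n] G01[of K n w] cc_bound(1)[OF w, of n] by (intro mult_mono) auto
    finally show ?thesis by simp
  qed
  have e1: "(\<integral>w. g w * xi n w \<partial>M) = (\<integral>w. g w * f (alpha n w) \<partial>M)"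
    by (rule E1[OF gF gb])
  have i1: "integrable M (\<lambda>w. g w * xi n w)"
    by (rule bint[where C="real n"]) (use gb xi_bound in \<open>auto simp: abs_mult intro: mult_le_one order_trans[OF mult_left_le]\<close>)
  have i2: "integrable M (\<lambda>w. g w * f (alpha n w))"
  proof (rule bint[where C="real n"])
    show "(\<lambda>w. g w * f (alpha n w)) \<in> borel_measurable M" by measurable
    fix w assume w: "w \<in> space M"
    have "\<bar>f (alpha n w)\<bar> \<le> 1" using frange'[OF w, of n] by auto
    then have "\<bar>g w\<bar> * \<bar>f (alpha n w)\<bar> \<le> \<bar>g w\<bar> * 1" by (intro mult_left_mono) auto
    then show "\<bar>g w * f (alpha n w)\<bar> \<le> real n" using gb[OF w] by (simp add: abs_mult)
  qed
  have iS: "integrable M (\<lambda>w. (S K n w)^2)"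
    by (rule bint[where C="real n ^ 2"]) (use S_sq_bound in auto)
  have imm: "integrable M (\<lambda>w. (mm K n w)^2)"
    by (rule bint[where C=1]) (use mm_bound(1) in \<open>auto simp: abs_square_le_1\<close>)
  have iGc: "integrable M (\<lambda>w. G K n w * cc n w ^ 2)"
  proof (rule bint[where C=1])
    show "(\<lambda>w. G K n w * cc n w ^ 2) \<in> borel_measurable M" by measurable
    fix w assume w: "w \<in> space M"
    have "cc n w ^ 2 \<le> 1" using cc_bound(1)[OF w, of n] by (simp add: abs_square_le_1)
    then show "\<bar>G K n w * cc n w ^ 2\<bar> \<le> 1" using G01[of K n w] by auto
  qed
  have iSum: "integrable M (\<lambda>w. \<Sum>k<n. G K k w * cc k w ^ 2)"
  proof (rule Bochner_Integration.integrable_sum[where f="\<lambda>k w. G K k w * cc k w ^ 2"])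
    fix k assume "k \<in> {..<n}"
    show "integrable M (\<lambda>w. G K k w * cc k w ^ 2)"
    proof (rule bint[where C=1])
      show "(\<lambda>w. G K k w * cc k w ^ 2) \<in> borel_measurable M" by measurable
      fix w assume w: "w \<in> space M"
      have "cc k w ^ 2 \<le> 1" using cc_bound(1)[OF w, of k] by (simp add: abs_square_le_1)
      then show "\<bar>G K k w * cc k w ^ 2\<bar> \<le> 1" using G01[of K k w] by auto
    qed
  qed
  have pw: "(S K (Suc n) w)^2 = (S K n w)^2 + (2 * (g w * xi n w) - 2 * (g w * f (alpha n w))) + (mm K n w)^2" for w
    by (simp add: S_def g_def mm_def power2_eq_square algebra_simps)
  have "(\<integral>w. (S K (Suc n) w)^2 \<partial>M) =
        (\<integral>w. (S K n w)^2 + (2 * (g w * xi n w) - 2 * (g w * f (alpha n w))) + (mm K n w)^2 \<partial>M)"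
    by (simp add: pw)
  also have "\<dots> = (\<integral>w. (S K n w)^2 \<partial>M) + (2 * (\<integral>w. g w * xi n w \<partial>M) - 2 * (\<integral>w. g w * f (alpha n w) \<partial>M))
                   + (\<integral>w. (mm K n w)^2 \<partial>M)"
    using iS i1 i2 imm by simp
  also have "\<dots> = (\<integral>w. (S K n w)^2 \<partial>M) + (\<integral>w. (mm K n w)^2 \<partial>M)" using e1 by simp
  also have "\<dots> \<le> (\<integral>w. (\<Sum>k<n. G K k w * cc k w ^ 2) \<partial>M) + (\<integral>w. G K n w * cc n w ^ 2 \<partial>M)"
  proof (rule add_mono[OF Suc.IH])
    show "(\<integral>w. (mm K n w)^2 \<partial>M) \<le> (\<integral>w. G K n w * cc n w ^ 2 \<partial>M)"
      by (rule integral_mono[OF imm iGc]) (rule mm_bound(2))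
  qed
  also have "\<dots> = (\<integral>w. (\<Sum>k<Suc n. G K k w * cc k w ^ 2) \<partial>M)"
    using iSum iGc by simp
  finally show ?case .
qed

lemma ES1: assumes K: "K \<ge> 0" shows "(\<integral>w. \<bar>S K n w\<bar> \<partial>M) \<le> (1 + 4 * K) / 2"
proof -
  have iS: "integrable M (\<lambda>w. (S K n w)^2)"
    by (rule bint[where C="real n ^ 2"]) (use S_sq_bound in auto)
  have iA: "integrable M (\<lambda>w. \<bar>S K n w\<bar>)"
    by (rule bint[where C="real n"]) (use S_bound in auto)
  have iSum: "integrable M (\<lambda>w. \<Sum>k<n. G K k w * cc k w ^ 2)"
  proof (rule Bochner_Integration.integrable_sum[where f="\<lambda>k w. G K k w * cc k w ^ 2"])
    fix k assume "k \<in> {..<n}"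
    show "integrable M (\<lambda>w. G K k w * cc k w ^ 2)"
    proof (rule bint[where C=1])
      show "(\<lambda>w. G K k w * cc k w ^ 2) \<in> borel_measurable M" by measurable
      fix w assume w: "w \<in> space M"
      have "cc k w ^ 2 \<le> 1" using cc_bound(1)[OF w, of k] by (simp add: abs_square_le_1)
      then show "\<bar>G K k w * cc k w ^ 2\<bar> \<le> 1" using G01[of K k w] by auto
    qed
  qed
  have "(\<integral>w. \<bar>S K n w\<bar> \<partial>M) \<le> (\<integral>w. (1 + (S K n w)^2) / 2 \<partial>M)"
  proof (rule integral_mono[OF iA])
    show "integrable M (\<lambda>w. (1 + (S K n w)^2) / 2)" using iS by simp
    fix w
    have "0 \<le> (\<bar>S K n w\<bar> - 1)^2" by simp
    then show "\<bar>S K n w\<bar> \<le> (1 + (S K n w)^2) / 2" by (simp add: power2_eq_square algebra_simps)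
  qed
  also have "\<dots> = (1 + (\<integral>w. (S K n w)^2 \<partial>M)) / 2" using iS prob_space by simp
  also have "\<dots> \<le> (1 + (\<integral>w. (\<Sum>k<n. G K k w * cc k w ^ 2) \<partial>M)) / 2" using ES2 by simp
  also have "(\<integral>w. (\<Sum>k<n. G K k w * cc k w ^ 2) \<partial>M) \<le> (\<integral>w. 4 * K \<partial>M)"
    by (rule integral_mono[OF iSum]) (use sumGcc[OF K] in auto)
  then have "(1 + (\<integral>w. (\<Sum>k<n. G K k w * cc k w ^ 2) \<partial>M)) / 2 \<le> (1 + 4 * K) / 2"
    using prob_space by simp
  finally show ?thesis .
qed


definition W :: "nat \<Rightarrow> 'w \<Rightarrow> real" where "W n w = l n w * (alpha n w - 1/2)^2"

lemma Wstep: assumes w: "w \<in> space M"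
  shows "W (Suc n) w - W n w - cc n w * (xi n w - f (alpha n w))
           \<ge> 1 / (4 * (l n w + 1)) - (2 * Bc + 1) * (alpha n w - 1/2)^2"
proof -
  have ls: "l (Suc n) w = l n w + 1" using U(7) w by blast
  have bi: "\<bar>(alpha n w - 1/2) * (f (alpha n w) - 1/2)\<bar> \<le> Bc * (alpha n w - 1/2)^2"
    using Bc(2) arange[OF w, of n] by blast
  from alg_step[OF lpos[OF w, of n] xi01[of n w] bi]
  show ?thesis unfolding W_def cc_def ls step[OF w, of n] by simp
qed

definition Bset :: "real \<Rightarrow> nat \<Rightarrow> 'w set" where
  "Bset K L = {w \<in> space M. (\<forall>n. (\<Sum>j\<le>n. (alpha j w - 1/2)^2) \<le> K) \<and> l 0 w \<le> real L}"

definition hh :: "nat \<Rightarrow> nat \<Rightarrow> real" where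
  "hh L n = (\<Sum>k<n. 1 / (4 * ((real L + 2) + real k)))"

lemma hh_at_top: "filterlim (hh L) at_top sequentially"
proof -
  have "filterlim (\<lambda>n. (1/4) * (\<Sum>k<n. 1 / ((real L + 2) + real k))) at_top sequentially"
    by (rule filterlim_tendsto_pos_mult_at_top[OF tendsto_const _ harm_shift_at_top]) auto
  moreover have "(1/4) * (\<Sum>k<n. 1 / ((real L + 2) + real k)) = hh L n" for n
    by (simp add: hh_def sum_distrib_left)
  ultimately show ?thesis by simp
qed

lemma sum_le_K: "w \<in> Bset K L \<Longrightarrow> (\<Sum>k<n. (alpha k w - 1/2)^2) \<le> K"
proof -
  assume w: "w \<in> Bset K L"
  have "(\<Sum>k<n. (alpha k w - 1/2)^2) \<le> (\<Sum>k\<le>n. (alpha k w - 1/2)^2)"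
    by (rule sum_mono2) auto
  also have "\<dots> \<le> K" using w by (auto simp: Bset_def)
  finally show ?thesis .
qed

lemma pathwise: assumes w: "w \<in> Bset K L"
  shows "W n w - S K n w \<ge> hh L n - (2 * Bc + 1) * (\<Sum>k<n. (alpha k w - 1/2)^2)"
proof (induction n)
  case 0
  have wM: "w \<in> space M" using w by (simp add: Bset_def)
  have "W 0 w \<ge> 0" using l0pos[OF wM] by (simp add: W_def)
  then show ?case by (simp add: S_def hh_def)
next
  case (Suc n)
  have wM: "w \<in> space M" using w by (simp add: Bset_def)
  have "G K n w = 1" using w by (simp add: Bset_def G_def)
  then have Ss: "S K (Suc n) w = S K n w + cc n w * (xi n w - f (alpha n w))"
    by (simp add: S_def mm_def)
  have st: "W (Suc n) w - W n w - cc n w * (xi n w - f (alpha n w))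
           \<ge> 1 / (4 * (l n w + 1)) - (2 * Bc + 1) * (alpha n w - 1/2)^2" by (rule Wstep[OF wM])
  have "l n w + 1 \<le> (real L + 2) + real n"
    using l_eq[OF wM, of n] w by (simp add: Bset_def)
  then have hl: "1 / (4 * ((real L + 2) + real n)) \<le> 1 / (4 * (l n w + 1))"
    using lpos[OF wM, of n] by (intro divide_left_mono) auto
  have hs: "hh L (Suc n) = hh L n + 1 / (4 * ((real L + 2) + real n))" by (simp add: hh_def)
  have ss: "(\<Sum>k<Suc n. (alpha k w - 1/2)^2) = (\<Sum>k<n. (alpha k w - 1/2)^2) + (alpha n w - 1/2)^2" by simp
  show ?case unfolding Ss hs ss using Suc.IH st hl by (simp add: algebra_simps)
qed

lemma xbound: assumes w: "w \<in> Bset K L"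
  shows "(hh L n - (2 * Bc + 1) * K - \<bar>S K n w\<bar>) / ((real L + 1) + real n) \<le> (alpha n w - 1/2)^2"
proof -
  have wM: "w \<in> space M" using w by (simp add: Bset_def)
  have "(2 * Bc + 1) * (\<Sum>k<n. (alpha k w - 1/2)^2) \<le> (2 * Bc + 1) * K"
    using sum_le_K[OF w] Bc(1) by (intro mult_left_mono) auto
  then have "hh L n - (2 * Bc + 1) * K - \<bar>S K n w\<bar> \<le> W n w"
    using pathwise[OF w, of n] by linarith
  also have "W n w \<le> ((real L + 1) + real n) * (alpha n w - 1/2)^2"
    unfolding W_def using l_eq[OF wM, of n] w by (intro mult_right_mono) (auto simp: Bset_def)
  finally show ?thesis by (simp add: pos_divide_le_eq mult.commute)
qed

lemma pathsum: assumes w: "w \<in> Bset K L"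
  shows "(\<Sum>n<T. (hh L n - (2 * Bc + 1) * K) / ((real L + 1) + real n))
           - (\<Sum>n<T. \<bar>S K n w\<bar> / ((real L + 1) + real n)) \<le> K"
proof -
  have "(\<Sum>n<T. (hh L n - (2 * Bc + 1) * K) / ((real L + 1) + real n))
           - (\<Sum>n<T. \<bar>S K n w\<bar> / ((real L + 1) + real n))
      = (\<Sum>n<T. (hh L n - (2 * Bc + 1) * K - \<bar>S K n w\<bar>) / ((real L + 1) + real n))"
    by (simp add: sum_subtractf[symmetric] diff_divide_distrib)
  also have "\<dots> \<le> (\<Sum>n<T. (alpha n w - 1/2)^2)"
    by (rule sum_mono) (rule xbound[OF w])
  also have "\<dots> \<le> K" by (rule sum_le_K[OF w])
  finally show ?thesis .
qed

lemma Bset_sets: "Bset K L \<in> sets M"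
  unfolding Bset_def by measurable

lemma integ_ineq: assumes K: "K \<ge> 0"
  shows "measure M (Bset K L) * ((\<Sum>n<T. (hh L n - (2 * Bc + 1) * K) / ((real L + 1) + real n)) - K)
         \<le> (1 + 4 * K) / 2 * (\<Sum>n<T. 1 / ((real L + 1) + real n))"
proof -
  define R where "R = (\<Sum>n<T. (hh L n - (2 * Bc + 1) * K) / ((real L + 1) + real n))"
  have iS: "integrable M (\<lambda>w. \<bar>S K n w\<bar> / ((real L + 1) + real n))" for n
  proof (rule bint[where C="real n"])
    show "(\<lambda>w. \<bar>S K n w\<bar> / ((real L + 1) + real n)) \<in> borel_measurable M" by measurable
    fix w assume wM: "w \<in> space M"
    have d: "(real L + 1) + real n \<ge> 1" by simp
    have "\<bar>S K n w\<bar> * 1 \<le> \<bar>S K n w\<bar> * ((real L + 1) + real n)" using d by (intro mult_left_mono) auto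
    then have "\<bar>S K n w\<bar> / ((real L + 1) + real n) \<le> \<bar>S K n w\<bar>" using d by (simp add: divide_le_eq)
    then show "\<bar>\<bar>S K n w\<bar> / ((real L + 1) + real n)\<bar> \<le> real n" using S_bound[OF wM, of K n] by simp
  qed
  have iSum: "integrable M (\<lambda>w. \<Sum>n<T. \<bar>S K n w\<bar> / ((real L + 1) + real n))"
    using iS by (intro Bochner_Integration.integrable_sum) auto
  have iB: "integrable M (\<lambda>w. indicator (Bset K L) w * (R - K))"
  proof (rule bint[where C="\<bar>R - K\<bar>"])
    show "(\<lambda>w. indicator (Bset K L) w * (R - K)) \<in> borel_measurable M"
      using Bset_sets by measurable
    fix w show "\<bar>indicator (Bset K L) w * (R - K)\<bar> \<le> \<bar>R - K\<bar>" by (simp add: indicator_def)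
  qed
  have "measure M (Bset K L) * (R - K) = (\<integral>w. indicator (Bset K L) w * (R - K) \<partial>M)"
    using Bset_sets by simp
  also have "\<dots> \<le> (\<integral>w. (\<Sum>n<T. \<bar>S K n w\<bar> / ((real L + 1) + real n)) \<partial>M)"
  proof (rule integral_mono[OF iB iSum])
    fix w assume wM: "w \<in> space M"
    show "indicator (Bset K L) w * (R - K) \<le> (\<Sum>n<T. \<bar>S K n w\<bar> / ((real L + 1) + real n))"
    proof (cases "w \<in> Bset K L")
      case True then show ?thesis using pathsum[OF True, of T] by (simp add: R_def)
    next
      case False then show ?thesis by (simp add: sum_nonneg)
    qed
  qed
  also have "\<dots> = (\<Sum>n<T. (\<integral>w. \<bar>S K n w\<bar> / ((real L + 1) + real n) \<partial>M))"
    using iS by (intro Bochner_Integration.integral_sum) auto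
  also have "\<dots> \<le> (\<Sum>n<T. (1 + 4 * K) / 2 * (1 / ((real L + 1) + real n)))"
  proof (rule sum_mono)
    fix n assume "n \<in> {..<T}"
    have "(\<integral>w. \<bar>S K n w\<bar> / ((real L + 1) + real n) \<partial>M) = (\<integral>w. \<bar>S K n w\<bar> \<partial>M) / ((real L + 1) + real n)"
      by simp
    also have "\<dots> \<le> ((1 + 4 * K) / 2) / ((real L + 1) + real n)"
      using ES1[OF K, of n] by (intro divide_right_mono) auto
    finally show "(\<integral>w. \<bar>S K n w\<bar> / ((real L + 1) + real n) \<partial>M) \<le> (1 + 4 * K) / 2 * (1 / ((real L + 1) + real n))"
      by simp
  qed
  also have "\<dots> = (1 + 4 * K) / 2 * (\<Sum>n<T. 1 / ((real L + 1) + real n))"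
    by (simp add: sum_distrib_left)
  finally show ?thesis unfolding R_def .
qed

lemma Bset_null: assumes K: "K \<ge> 0" shows "measure M (Bset K L) = 0"
  by (rule contra_lemma[where Lp="real L + 1" and cz="(1 + 4 * K) / 2" and h="hh L"
        and C="(2 * Bc + 1) * K" and K=K])
     (use K hh_at_top integ_ineq[OF K] in auto)

lemma AE_unbounded: "AE w in M. \<forall>K::nat. \<exists>n. (\<Sum>j\<le>n. (alpha j w - 1/2)^2) > real K"
proof -
  have "AE w in M. w \<notin> Bset (real K) L" for K L :: nat
  proof (rule AE_not_in)
    show "Bset (real K) L \<in> null_sets M"
      using Bset_sets Bset_null[of "real K" L] by (simp add: emeasure_eq_measure null_sets_def)
  qed
  then have "AE w in M. \<forall>K::nat. \<forall>L::nat. w \<notin> Bset (real K) L"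
    by (simp add: AE_all_countable)
  then show ?thesis
  proof (rule AE_mp[OF _ AE_I2[OF impI]])
    fix w assume wM: "w \<in> space M" and h: "\<forall>K::nat. \<forall>L::nat. w \<notin> Bset (real K) L"
    show "\<forall>K::nat. \<exists>n. (\<Sum>j\<le>n. (alpha j w - 1/2)^2) > real K"
    proof
      fix K :: nat
      obtain L :: nat where L: "l 0 w \<le> real L" using real_arch_simple by blast
      from h wM L have "\<not> (\<forall>n. (\<Sum>j\<le>n. (alpha j w - 1/2)^2) \<le> real K)"
        by (auto simp: Bset_def)
      then show "\<exists>n. (\<Sum>j\<le>n. (alpha j w - 1/2)^2) > real K" by (auto simp: not_le)
    qed
  qed
qed

end
theorem proposition4:
  fixes f f1 f2 f3 :: "real \<Rightarrow> real"
    and M :: "'w measure" and F :: "nat \<Rightarrow> 'w measure"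
    and alpha l :: "nat \<Rightarrow> 'w \<Rightarrow> real"
  assumes range: "\<forall>x\<in>{0..1}. f x \<in> {0<..<1}"
    and d1: "\<forall>x\<in>{0..1}. (f has_real_derivative f1 x) (at x within {0..1})"
    and d2: "\<forall>x\<in>{0..1}. (f1 has_real_derivative f2 x) (at x within {0..1})"
    and d3: "\<forall>x\<in>{0..1}. (f2 has_real_derivative f3 x) (at x within {0..1})"
    and c3: "continuous_on {0..1} f3"
    and isolated: "\<forall>p\<in>{0..1}. f p = p \<longrightarrow>
                     (\<exists>e>0. \<forall>x\<in>{0..1}. f x = x \<and> \<bar>x - p\<bar> < e \<longrightarrow> x = p)"
    and fix_half: "f (1/2) = 1/2"
    and stable: "f1 (1/2) \<le> 1"
    and deriv_zero: "f1 (1/2) = 0"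
    and urn: "urn_process M F f alpha l"
  shows "(f2 (1/2) > 0 \<longrightarrow>
            (AE w in M. (\<lambda>n. alpha n w) \<longlonglongrightarrow> 1/2 \<longrightarrow>
                        filterlim (\<lambda>n. urn_delta f alpha n w) at_top sequentially))
       \<and> (f2 (1/2) < 0 \<longrightarrow>
            (AE w in M. (\<lambda>n. alpha n w) \<longlonglongrightarrow> 1/2 \<longrightarrow>
                        filterlim (\<lambda>n. urn_delta f alpha n w) at_bot sequentially))"
  proof -
  have fcont: "continuous_on {0..1} f" by (rule DERIV_continuous_on) (use d1 in auto)
  obtain \<eta>0 where \<eta>0: "\<eta>0 > 0" "\<eta>0 \<le> 1/4"
    "\<forall>a. \<bar>a - 1/2\<bar> < \<eta>0 \<longrightarrow> \<bar>f a - 1/2 - f2 (1/2) / 2 * (a - 1/2)^2\<bar> \<le> 1 / 2 * (a - 1/2)^2"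
    using taylor_local[OF d1 d2 d3 fix_half deriv_zero, of 1] by auto
  define Mc where "Mc = \<bar>f2 (1/2)\<bar> / 2 + 1/2"
  define Bc where "Bc = Mc + 1 / (2 * \<eta>0)"
  have Mc0: "Mc \<ge> 0" by (simp add: Mc_def)
  have Bc0: "Bc \<ge> 0" using \<eta>0 Mc0 by (simp add: Bc_def)
  have Bcb: "\<forall>a\<in>{0..1}. \<bar>(a - 1/2) * (f a - 1/2)\<bar> \<le> Bc * (a - 1/2)^2"
  proof
    fix a :: real assume a: "a \<in> {0..1}"
    define x where "x = a - 1/2"
    have xa: "\<bar>x\<bar> \<le> 1" using a by (auto simp: x_def)
    have fr0: "0 < f a" "f a < 1" using range a by auto
    have fr: "\<bar>f a - 1/2\<bar> \<le> 1/2" using fr0 by linarith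
    have x2: "x^2 = \<bar>x\<bar> * \<bar>x\<bar>" by (simp add: power2_eq_square abs_mult[symmetric])
    have "\<bar>x * (f a - 1/2)\<bar> \<le> Bc * x^2"
    proof (cases "\<bar>x\<bar> < \<eta>0")
      case True
      have t: "\<bar>f a - 1/2 - f2 (1/2) / 2 * x^2\<bar> \<le> 1/2 * x^2" using \<eta>0(3) True by (simp add: x_def)
      have "\<bar>f2 (1/2) / 2 * x^2\<bar> = \<bar>f2 (1/2)\<bar> / 2 * x^2" by (simp add: abs_mult)
      moreover have "\<bar>f a - 1/2\<bar> \<le> \<bar>f a - 1/2 - f2 (1/2) / 2 * x^2\<bar> + \<bar>f2 (1/2) / 2 * x^2\<bar>"
        by (rule order_trans[OF _ abs_triangle_ineq]) simp
      moreover have "Mc * x^2 = 1/2 * x^2 + \<bar>f2 (1/2)\<bar> / 2 * x^2" by (simp add: Mc_def algebra_simps)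
      ultimately have fb: "\<bar>f a - 1/2\<bar> \<le> Mc * x^2" using t by linarith
      have "\<bar>x * (f a - 1/2)\<bar> = \<bar>x\<bar> * \<bar>f a - 1/2\<bar>" by (simp add: abs_mult)
      also have "\<dots> \<le> 1 * (Mc * x^2)" using xa fb by (intro mult_mono) auto
      also have "\<dots> \<le> Bc * x^2" using \<eta>0 by (simp add: Bc_def distrib_right)
      finally show ?thesis .
    next
      case False
      have "\<bar>x * (f a - 1/2)\<bar> = \<bar>x\<bar> * \<bar>f a - 1/2\<bar>" by (simp add: abs_mult)
      also have "\<dots> \<le> \<bar>x\<bar> * (1/2)" using fr by (intro mult_left_mono) auto
      also have "\<dots> \<le> (\<bar>x\<bar> * \<bar>x\<bar> / \<eta>0) * (1/2)"
      proof -
        have "\<bar>x\<bar> * \<eta>0 \<le> \<bar>x\<bar> * \<bar>x\<bar>" using False by (intro mult_left_mono) auto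
        then have "\<bar>x\<bar> \<le> \<bar>x\<bar> * \<bar>x\<bar> / \<eta>0" using \<eta>0 by (simp add: le_divide_eq)
        then show ?thesis by simp
      qed
      also have "\<dots> = 1 / (2 * \<eta>0) * x^2" using x2 by simp
      also have "\<dots> \<le> Bc * x^2" using Mc0 by (simp add: Bc_def distrib_right)
      finally show ?thesis .
    qed
    then show "\<bar>(a - 1/2) * (f a - 1/2)\<bar> \<le> Bc * (a - 1/2)^2" by (simp add: x_def)
  qed
  interpret U: urnP M F f alpha l Bc
    by unfold_locales (use urn range fcont Bc0 Bcb in auto)
  have AEu: "AE w in M. \<forall>K::nat. \<exists>n. (\<Sum>j\<le>n. (alpha j w - 1/2)^2) > real K"
    by (rule U.AE_unbounded)
  have ev_close: "eventually (\<lambda>k. \<bar>alpha k w - 1/2\<bar> < \<eta>) sequentially"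
    if "(\<lambda>n. alpha n w) \<longlonglongrightarrow> 1/2" "\<eta> > 0" for w and \<eta> :: real
    using that by (simp add: tendsto_iff dist_real_def)
  show ?thesis
  proof (intro conjI impI)
    assume pos: "f2 (1/2) > 0"
    obtain \<eta> where \<eta>: "\<eta> > 0"
      "\<forall>a. \<bar>a - 1/2\<bar> < \<eta> \<longrightarrow> \<bar>f a - 1/2 - f2 (1/2) / 2 * (a - 1/2)^2\<bar> \<le> (f2 (1/2) / 2) / 2 * (a - 1/2)^2"
      using taylor_local[OF d1 d2 d3 fix_half deriv_zero, of "f2 (1/2) / 2"] pos by auto
    have lowb: "2 * f a - 1 \<ge> f2 (1/2) / 2 * (a - 1/2)^2" if "\<bar>a - 1/2\<bar> < \<eta>" for a
    proof -
      define X where "X = f2 (1/2) * (a - 1/2)^2"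
      have "\<bar>f a - 1/2 - f2 (1/2) / 2 * (a - 1/2)^2\<bar> \<le> (f2 (1/2) / 2) / 2 * (a - 1/2)^2"
        using \<eta>(2) that by blast
      then have "\<bar>f a - 1/2 - X / 2\<bar> \<le> X / 4" by (simp add: X_def)
      then have "2 * f a - 1 \<ge> X / 2" unfolding abs_le_iff by linarith
      then show ?thesis by (simp add: X_def)
    qed
    show "AE w in M. (\<lambda>n. alpha n w) \<longlonglongrightarrow> 1/2 \<longrightarrow>
                        filterlim (\<lambda>n. urn_delta f alpha n w) at_top sequentially"
      using AEu
    proof (rule AE_mp[OF _ AE_I2[OF impI[OF impI]]])
      fix w assume unb: "\<forall>K::nat. \<exists>n. (\<Sum>j\<le>n. (alpha j w - 1/2)^2) > real K"
        and conv: "(\<lambda>n. alpha n w) \<longlonglongrightarrow> 1/2"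
      have ev: "eventually (\<lambda>k. 2 * f (alpha k w) - 1 \<ge> f2 (1/2) / 2 * (alpha k w - 1/2)^2) sequentially"
        using ev_close[OF conv \<eta>(1)] by (rule eventually_mono) (rule lowb)
      have "filterlim (\<lambda>n. \<Sum>k\<le>n. 2 * f (alpha k w) - 1) at_top sequentially"
        by (rule sum_at_top[OF _ ev unb]) (use pos in simp)
      then show "filterlim (\<lambda>n. urn_delta f alpha n w) at_top sequentially"
        by (simp add: urn_delta_def)
    qed
  next
    assume neg: "f2 (1/2) < 0"
    obtain \<eta> where \<eta>: "\<eta> > 0"
      "\<forall>a. \<bar>a - 1/2\<bar> < \<eta> \<longrightarrow> \<bar>f a - 1/2 - f2 (1/2) / 2 * (a - 1/2)^2\<bar> \<le> (- f2 (1/2) / 2) / 2 * (a - 1/2)^2"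
      using taylor_local[OF d1 d2 d3 fix_half deriv_zero, of "- f2 (1/2) / 2"] neg by auto
    have lowb: "- (2 * f a - 1) \<ge> (- f2 (1/2) / 2) * (a - 1/2)^2" if "\<bar>a - 1/2\<bar> < \<eta>" for a
    proof -
      define X where "X = f2 (1/2) * (a - 1/2)^2"
      have "\<bar>f a - 1/2 - f2 (1/2) / 2 * (a - 1/2)^2\<bar> \<le> (- f2 (1/2) / 2) / 2 * (a - 1/2)^2"
        using \<eta>(2) that by blast
      then have "\<bar>f a - 1/2 - X / 2\<bar> \<le> - X / 4" by (simp add: X_def)
      then have "- (2 * f a - 1) \<ge> - X / 2" unfolding abs_le_iff by linarith
      then show ?thesis by (simp add: X_def)
    qed
    show "AE w in M. (\<lambda>n. alpha n w) \<longlonglongrightarrow> 1/2 \<longrightarrow>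
                        filterlim (\<lambda>n. urn_delta f alpha n w) at_bot sequentially"
      using AEu
    proof (rule AE_mp[OF _ AE_I2[OF impI[OF impI]]])
      fix w assume unb: "\<forall>K::nat. \<exists>n. (\<Sum>j\<le>n. (alpha j w - 1/2)^2) > real K"
        and conv: "(\<lambda>n. alpha n w) \<longlonglongrightarrow> 1/2"
      have ev: "eventually (\<lambda>k. - (2 * f (alpha k w) - 1) \<ge> (- f2 (1/2) / 2) * (alpha k w - 1/2)^2) sequentially"
        using ev_close[OF conv \<eta>(1)] by (rule eventually_mono) (rule lowb)
      have L1: "filterlim (\<lambda>n. \<Sum>k\<le>n. - (2 * f (alpha k w) - 1)) at_top sequentially"
        by (rule sum_at_top[OF _ ev unb]) (use neg in simp)
      have eqf: "(\<lambda>n. - (\<Sum>k\<le>n. 2 * f (alpha k w) - 1)) = (\<lambda>n. \<Sum>k\<le>n. - (2 * f (alpha k w) - 1))"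
        by (simp only: sum_negf)
      have "filterlim (\<lambda>n. - (\<Sum>k\<le>n. 2 * f (alpha k w) - 1)) at_top sequentially"
        unfolding eqf by (rule L1)
      then have "filterlim (\<lambda>n. - (- (\<Sum>k\<le>n. 2 * f (alpha k w) - 1))) at_bot sequentially"
        by (simp only: filterlim_uminus_at_top)
      then show "filterlim (\<lambda>n. urn_delta f alpha n w) at_bot sequentially"
        by (simp add: urn_delta_def)
    qed
  qed
qed

end
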